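(* The population size of Global SEMO (with fitness $f(x)=(Cost(x),LP(x))$) on the weighted vertex cover problem is at all times upper bounded by $2\cdot OPT+1$.
   Context: Weighted vertex cover: $G=(V,E)$, $V=\{v_1,\dots,v_n\}$, $w:V\to\mathbb{N}^+$; $OPT$ is the minimum weight of a vertex cover. Search points $x\in\{0,1\}^n$; $Cost(x)=\sum_i w(v_i)x_i$; $G(x)$ is $G$ with selected vertices and edges having a selected endpoint removed; $LP(x)$ is the optimal value of: minimize $\sum_{v_i\in V(x)}w(v_i)y_i$ s.t. $y_i+y_j\ge1$ for edges $\{v_i,v_j\}$ of $G(x)$, $0\le y_i\le1$. $f(x)\le f(y)$ means componentwise $\le$. Global SEMO: start with a uniformly random $x$, $P=\{x\}$; each iteration choose $x\in P$ uniformly at random, create $x'$ by flipping each bit independently with probability $1/n$; if no $y\in P$ has $f(y)\le f(x')$, add $x'$ to $P$ and delete all other $z\in P$ with $f(x')\le f(z)$. *)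

theory Defs
  imports "HOL-Probability.Probability"
begin

text \<open>Vertices are v_0,...,v_{n-1}, represented by indices i < n. A search point is a bit string x, represented as a function nat => bool whose
  values at indices >= n are irrelevant (and are False for every point SEMO generates).\<close>

definition is_graph :: "nat \<Rightarrow> nat set set \<Rightarrow> bool" where
  "is_graph n E \<longleftrightarrow> (\<forall>e\<in>E. \<exists>i j. e = {i, j} \<and> i < n \<and> j < n \<and> i \<noteq> j)"

definition Cost :: "nat \<Rightarrow> (nat \<Rightarrow> nat) \<Rightarrow> (nat \<Rightarrow> bool) \<Rightarrow> nat" where
  "Cost n w x = (\<Sum>i<n. w i * (if x i then 1 else 0))"

definition is_vertex_cover :: "nat \<Rightarrow> nat set set \<Rightarrow> (nat \<Rightarrow> bool) \<Rightarrow> bool" where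
  "is_vertex_cover n E x \<longleftrightarrow> (\<forall>e\<in>E. \<exists>i\<in>e. i < n \<and> x i)"

definition OPT :: "nat \<Rightarrow> nat set set \<Rightarrow> (nat \<Rightarrow> nat) \<Rightarrow> nat" where
  "OPT n E w = (LEAST c. \<exists>x. is_vertex_cover n E x \<and> Cost n w x = c)"

definition rem_vertices :: "nat \<Rightarrow> (nat \<Rightarrow> bool) \<Rightarrow> nat set" where
  "rem_vertices n x = {i. i < n \<and> \<not> x i}"

definition rem_edges :: "nat set set \<Rightarrow> (nat \<Rightarrow> bool) \<Rightarrow> nat set set" where
  "rem_edges E x = {e \<in> E. \<forall>i\<in>e. \<not> x i}"

definition LP :: "nat \<Rightarrow> nat set set \<Rightarrow> (nat \<Rightarrow> nat) \<Rightarrow> (nat \<Rightarrow> bool) \<Rightarrow> real" where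
  "LP n E w x = Inf {(\<Sum>i\<in>rem_vertices n x. real (w i) * y i) | y :: nat \<Rightarrow> real.
       (\<forall>e\<in>rem_edges E x. \<forall>i j. e = {i, j} \<longrightarrow> y i + y j \<ge> 1) \<and>
       (\<forall>i\<in>rem_vertices n x. 0 \<le> y i \<and> y i \<le> 1)}"

definition fit_le :: "nat \<Rightarrow> nat set set \<Rightarrow> (nat \<Rightarrow> nat) \<Rightarrow> (nat \<Rightarrow> bool) \<Rightarrow> (nat \<Rightarrow> bool) \<Rightarrow> bool" where
  "fit_le n E w x y \<longleftrightarrow> real (Cost n w x) \<le> real (Cost n w y) \<and> LP n E w x \<le> LP n E w y"

definition init_pmf :: "nat \<Rightarrow> (nat \<Rightarrow> bool) pmf" where
  "init_pmf n = Pi_pmf {..<n} False (\<lambda>_. bernoulli_pmf (1/2))"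

definition mutate :: "nat \<Rightarrow> (nat \<Rightarrow> bool) \<Rightarrow> (nat \<Rightarrow> bool) pmf" where
  "mutate n x = map_pmf (\<lambda>m i. x i \<noteq> m i) (Pi_pmf {..<n} False (\<lambda>_. bernoulli_pmf (1 / real n)))"

definition semo_step :: "nat \<Rightarrow> nat set set \<Rightarrow> (nat \<Rightarrow> nat) \<Rightarrow> (nat \<Rightarrow> bool) set \<Rightarrow> (nat \<Rightarrow> bool) set pmf" where
  "semo_step n E w P =
     pmf_of_set P \<bind> (\<lambda>x. mutate n x \<bind> (\<lambda>x'. return_pmf
       (if (\<exists>y\<in>P. fit_le n E w y x') then P
        else insert x' {z \<in> P. \<not> fit_le n E w x' z})))"

fun semo_pop :: "nat \<Rightarrow> nat set set \<Rightarrow> (nat \<Rightarrow> nat) \<Rightarrow> nat \<Rightarrow> (nat \<Rightarrow> bool) set pmf" where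
  "semo_pop n E w 0 = map_pmf (\<lambda>x. {x}) (init_pmf n)"
| "semo_pop n E w (Suc t) = semo_pop n E w t \<bind> semo_step n E w"

end

theory Submission
  imports Defs
begin

definition hv :: "real \<Rightarrow> bool" where "hv a \<longleftrightarrow> a = 0 \<or> a = 1/2 \<or> a = 1"

lemma half_int_aux:
  fixes V :: "nat set" and Ed :: "nat set set" and w :: "nat \<Rightarrow> real"
  assumes fin: "finite V" and edges: "\<forall>e\<in>Ed. e \<subseteq> V"
  shows "\<forall>y. card {i\<in>V. \<not> hv (y i)} = k \<longrightarrow>
     (\<forall>e\<in>Ed. \<forall>i j. e = {i,j} \<longrightarrow> y i + y j \<ge> 1) \<longrightarrow> (\<forall>i\<in>V. 0 \<le> y i \<and> y i \<le> 1) \<longrightarrow>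
     (\<exists>y'. (\<forall>e\<in>Ed. \<forall>i j. e = {i,j} \<longrightarrow> y' i + y' j \<ge> 1) \<and> (\<forall>i\<in>V. 0 \<le> y' i \<and> y' i \<le> 1) \<and>
        (\<forall>i\<in>V. hv (y' i)) \<and> (\<Sum>i\<in>V. w i * y' i) \<le> (\<Sum>i\<in>V. w i * y i))"
proof (induction k rule: less_induct)
  case (less k)
  show ?case
  proof (intro allI impI)
    fix y :: "nat \<Rightarrow> real"
    assume ck: "card {i\<in>V. \<not> hv (y i)} = k"
      and fe: "\<forall>e\<in>Ed. \<forall>i j. e = {i,j} \<longrightarrow> y i + y j \<ge> 1"
      and bx: "\<forall>i\<in>V. 0 \<le> y i \<and> y i \<le> 1"
    define N where "N = {i\<in>V. \<not> hv (y i)}"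
    show "\<exists>y'. (\<forall>e\<in>Ed. \<forall>i j. e = {i,j} \<longrightarrow> y' i + y' j \<ge> 1) \<and> (\<forall>i\<in>V. 0 \<le> y' i \<and> y' i \<le> 1) \<and>
        (\<forall>i\<in>V. hv (y' i)) \<and> (\<Sum>i\<in>V. w i * y' i) \<le> (\<Sum>i\<in>V. w i * y i)"
    proof (cases "N = {}")
      case True
      then show ?thesis using fe bx unfolding N_def by (intro exI[of _ y]) auto
    next
      case False
      define Sp where "Sp = {i\<in>V. 0 < y i \<and> y i < 1/2}"
      define Sm where "Sm = {i\<in>V. 1/2 < y i \<and> y i < 1}"
      have NS: "N = Sp \<union> Sm" using bx unfolding N_def Sp_def Sm_def hv_def
        by (auto; smt (verit))
      define \<delta> where "\<delta> i = (if i \<in> Sp then 1 else if i \<in> Sm then -1 else (0::real))" for i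
      define d where "d = (\<Sum>i\<in>V. w i * \<delta> i)"
      define s where "s = (if d \<le> 0 then 1 else -1 :: real)"
      define dist where "dist i = (if s * \<delta> i = 1 then (if i\<in>Sp then 1/2 - y i else 1 - y i)
                                 else (if i \<in> Sp then y i else y i - 1/2))" for i
      have finN: "finite N" using fin unfolding N_def by auto
      obtain i0 where i0: "i0 \<in> N" "\<forall>i\<in>N. dist i0 \<le> dist i"
        using finN False by (metis (no_types) arg_min_if_finite(1,2) not_less)
      define \<epsilon> where "\<epsilon> = dist i0"
      have SpSm: "Sp \<inter> Sm = {}" unfolding Sp_def Sm_def by auto
      have s1: "s = 1 \<or> s = -1" unfolding s_def by auto
      have distpos: "dist i > 0" if "i \<in> N" for i
        using that s1 unfolding NS dist_def \<delta>_def Sp_def Sm_def by auto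
      have epos: "\<epsilon> > 0" using distpos i0 unfolding \<epsilon>_def by auto
      define y' where "y' i = y i + s * \<epsilon> * \<delta> i" for i
      have Spf: "0 \<le> y' i \<and> y' i \<le> 1/2 \<and> y' i - y i = s * \<epsilon>" if "i \<in> Sp" for i
      proof -
        have "dist i0 \<le> dist i" using i0 that NS by auto
        then show ?thesis using that s1 epos unfolding y'_def \<epsilon>_def dist_def \<delta>_def Sp_def
          by (auto split: if_splits)
      qed
      have Smf: "1/2 \<le> y' i \<and> y' i \<le> 1 \<and> y' i - y i = - (s * \<epsilon>)" if "i \<in> Sm" for i
      proof -
        have nSp: "i \<notin> Sp" using that SpSm by auto
        have "dist i0 \<le> dist i" using i0 that NS by auto
        then show ?thesis using that nSp s1 epos unfolding y'_def \<epsilon>_def dist_def \<delta>_def Sm_def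
          by (auto split: if_splits)
      qed
      have oth: "y' i = y i" if "i \<notin> N" for i
        using that NS unfolding y'_def \<delta>_def by auto
      have hvi0: "hv (y' i0)"
      proof -
        have "i0 \<in> Sp \<or> i0 \<in> Sm" using i0 NS by auto
        then show ?thesis using s1 SpSm unfolding hv_def y'_def \<epsilon>_def dist_def \<delta>_def
          by (auto split: if_splits)
      qed
      have sub: "{i\<in>V. \<not> hv (y' i)} \<subseteq> N - {i0}"
        using oth hvi0 unfolding N_def by auto
      have lt: "card {i\<in>V. \<not> hv (y' i)} < k"
      proof -
        have "card {i\<in>V. \<not> hv (y' i)} \<le> card (N - {i0})"
          using sub finN by (intro card_mono) auto
        also have "\<dots> < card N" using finN i0(1) by (meson card_Diff1_less)
        finally show ?thesis using ck N_def by simp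
      qed
      have bx': "\<forall>i\<in>V. 0 \<le> y' i \<and> y' i \<le> 1"
      proof
        fix i assume iV: "i \<in> V"
        show "0 \<le> y' i \<and> y' i \<le> 1"
        proof (cases "i \<in> N")
          case True then show ?thesis using Spf Smf NS by fastforce
        next
          case False then show ?thesis using oth bx iV by auto
        qed
      qed
      have cls: "i \<in> Sp \<or> i \<in> Sm \<or> (i \<notin> N \<and> hv (y i))" if "i \<in> V" for i
        using that NS unfolding N_def by auto
      have fe': "\<forall>e\<in>Ed. \<forall>i j. e = {i,j} \<longrightarrow> y' i + y' j \<ge> 1"
      proof (intro ballI allI impI)
        fix e i j assume e: "e \<in> Ed" "e = {i,j}"
        have iV: "i \<in> V" and jV: "j \<in> V" using edges e by auto
        have sum: "y i + y j \<ge> 1" using fe e by auto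
        have yi: "0 \<le> y i \<and> y i \<le> 1" "0 \<le> y j \<and> y j \<le> 1" using bx iV jV by auto
        have ci: "(0 < y i \<and> y i < 1/2) \<or> (1/2 < y i \<and> y i < 1) \<or> y i = 0 \<or> y i = 1/2 \<or> y i = 1"
          and cj: "(0 < y j \<and> y j < 1/2) \<or> (1/2 < y j \<and> y j < 1) \<or> y j = 0 \<or> y j = 1/2 \<or> y j = 1"
          using yi by linarith+
        from cls[OF iV] cls[OF jV] show "y' i + y' j \<ge> 1"
        proof (elim disjE conjE)
          assume "i \<in> Sp" "j \<in> Sp" then show ?thesis using sum unfolding Sp_def by auto
        next
          assume a: "i \<in> Sp" "j \<in> Sm" then show ?thesis using Spf[OF a(1)] Smf[OF a(2)] sum by linarith
        next
          assume a: "i \<in> Sm" "j \<in> Sp" then show ?thesis using Smf[OF a(1)] Spf[OF a(2)] sum by linarith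
        next
          assume a: "i \<in> Sm" "j \<in> Sm" then show ?thesis using Smf[OF a(1)] Smf[OF a(2)] by linarith
        next
          assume a: "i \<in> Sp" "j \<notin> N" "hv (y j)"
          then have "y j = 1" using sum unfolding Sp_def hv_def by auto
          then show ?thesis using Spf[OF a(1)] oth[OF a(2)] by linarith
        next
          assume a: "i \<in> Sm" "j \<notin> N" "hv (y j)"
          then show ?thesis using Smf[OF a(1)] oth[OF a(2)] sum unfolding Sm_def hv_def by auto
        next
          assume a: "j \<in> Sp" "i \<notin> N" "hv (y i)"
          then have "y i = 1" using sum unfolding Sp_def hv_def by auto
          then show ?thesis using Spf[OF a(1)] oth[OF a(2)] by linarith
        next
          assume a: "j \<in> Sm" "i \<notin> N" "hv (y i)"
          then show ?thesis using Smf[OF a(1)] oth[OF a(2)] sum unfolding Sm_def hv_def by auto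
        next
          assume a: "i \<notin> N" "j \<notin> N"
          then show ?thesis using oth sum by auto
        qed
      qed
      have cost: "(\<Sum>i\<in>V. w i * y' i) = (\<Sum>i\<in>V. w i * y i) + s * \<epsilon> * d"
        unfolding y'_def d_def by (simp add: algebra_simps sum.distrib sum_distrib_left)
      have "s * d \<le> 0" unfolding s_def by auto
      then have "s * \<epsilon> * d \<le> 0" using epos
        by (metis mult.commute mult.left_commute mult_nonneg_nonpos less_imp_le)
      then have cle: "(\<Sum>i\<in>V. w i * y' i) \<le> (\<Sum>i\<in>V. w i * y i)" using cost by linarith
      have IH: "\<exists>y''. (\<forall>e\<in>Ed. \<forall>i j. e = {i,j} \<longrightarrow> y'' i + y'' j \<ge> 1) \<and> (\<forall>i\<in>V. 0 \<le> y'' i \<and> y'' i \<le> 1) \<and>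
        (\<forall>i\<in>V. hv (y'' i)) \<and> (\<Sum>i\<in>V. w i * y'' i) \<le> (\<Sum>i\<in>V. w i * y' i)"
        using less.IH[OF lt, rule_format, of y'] fe' bx' by blast
      from IH obtain y'' where
        "(\<forall>e\<in>Ed. \<forall>i j. e = {i,j} \<longrightarrow> y'' i + y'' j \<ge> 1) \<and> (\<forall>i\<in>V. 0 \<le> y'' i \<and> y'' i \<le> 1) \<and>
        (\<forall>i\<in>V. hv (y'' i)) \<and> (\<Sum>i\<in>V. w i * y'' i) \<le> (\<Sum>i\<in>V. w i * y' i)" by blast
      then show ?thesis using cle by (intro exI[of _ y'']) auto
    qed
  qed
qed


lemma OPT_attained:
  assumes "is_graph n E"
  shows "\<exists>z. is_vertex_cover n E z \<and> Cost n w z = OPT n E w"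
proof -
  have "is_vertex_cover n E (\<lambda>_. True)" using assms unfolding is_graph_def is_vertex_cover_def by fastforce
  then have ex: "\<exists>c x. is_vertex_cover n E x \<and> Cost n w x = c" by blast
  show ?thesis unfolding OPT_def using LeastI_ex[OF ex] by blast
qed

lemma hv_nat:
  assumes "\<forall>i\<in>V. hv (y i)" "finite V"
  shows "\<exists>k::nat. (\<Sum>i\<in>V. real (w i) * y i) = real k / 2"
proof -
  define t where "t i = (if y i = 0 then 0 else if y i = 1/2 then 1 else (2::nat))" for i
  have "real (w i) * y i = real (w i * t i) / 2" if "i \<in> V" for i
    using assms(1) that unfolding t_def hv_def by auto
  then have "(\<Sum>i\<in>V. real (w i) * y i) = (\<Sum>i\<in>V. real (w i * t i) / 2)" by (rule sum.cong[OF refl])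
  also have "\<dots> = real (\<Sum>i\<in>V. w i * t i) / 2" by (simp add: sum_divide_distrib)
  finally show ?thesis by blast
qed

lemma LP_half:
  assumes g: "is_graph n E"
  shows "\<exists>k::nat. LP n E w x = real k / 2 \<and> k \<le> 2 * OPT n E w"
proof -
  define V where "V = rem_vertices n x"
  define Ed where "Ed = rem_edges E x"
  have finV: "finite V" unfolding V_def rem_vertices_def by auto
  have edges: "\<forall>e\<in>Ed. e \<subseteq> V"
  proof (intro ballI subsetI)
    fix e i assume e: "e \<in> Ed" "i \<in> e"
    then have eE: "e \<in> E" and nx: "\<not> x i" unfolding Ed_def rem_edges_def by auto
    obtain a b where "e = {a,b}" "a < n" "b < n" using g eE unfolding is_graph_def by blast
    then have "i < n" using e(2) by auto
    then show "i \<in> V" using nx unfolding V_def rem_vertices_def by auto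
  qed
  define feas where "feas y \<longleftrightarrow> (\<forall>e\<in>Ed. \<forall>i j. e = {i,j} \<longrightarrow> y i + y j \<ge> 1) \<and> (\<forall>i\<in>V. 0 \<le> y i \<and> y i \<le> 1)" for y :: "nat \<Rightarrow> real"
  define c where "c y = (\<Sum>i\<in>V. real (w i) * y i)" for y :: "nat \<Rightarrow> real"
  have LPe: "LP n E w x = Inf {c y | y. feas y}"
    unfolding LP_def c_def feas_def V_def Ed_def by (rule refl)
  have half: "\<exists>y'. feas y' \<and> (\<forall>i\<in>V. hv (y' i)) \<and> c y' \<le> c y" if "feas y" for y
  proof -
    have "\<exists>y'. (\<forall>e\<in>Ed. \<forall>i j. e = {i,j} \<longrightarrow> y' i + y' j \<ge> 1) \<and> (\<forall>i\<in>V. 0 \<le> y' i \<and> y' i \<le> 1) \<and>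
        (\<forall>i\<in>V. hv (y' i)) \<and> (\<Sum>i\<in>V. real (w i) * y' i) \<le> (\<Sum>i\<in>V. real (w i) * y i)"
      using half_int_aux[OF finV edges, of "card {i\<in>V. \<not> hv (y i)}" "\<lambda>i. real (w i)"] that unfolding feas_def by blast
    then show ?thesis unfolding feas_def c_def by blast
  qed
  define K where "K = {k::nat. \<exists>y. feas y \<and> (\<forall>i\<in>V. hv (y i)) \<and> c y = real k / 2}"
  obtain z where z: "is_vertex_cover n E z" "Cost n w z = OPT n E w" using OPT_attained[OF g] by blast
  define yz where "yz i = (if z i then 1 else 0 :: real)" for i
  have fz: "feas yz"
  proof -
    have "yz i + yz j \<ge> 1" if "e \<in> Ed" "e = {i,j}" for e i j
    proof -
      have "e \<in> E" using that unfolding Ed_def rem_edges_def by auto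
      then obtain k where "k \<in> e" "z k" using z(1) unfolding is_vertex_cover_def by blast
      then show ?thesis using that unfolding yz_def by auto
    qed
    moreover have "\<forall>i\<in>V. 0 \<le> yz i \<and> yz i \<le> 1" unfolding yz_def by auto
    ultimately show ?thesis unfolding feas_def by blast
  qed
  have hz: "\<forall>i\<in>V. hv (yz i)" unfolding yz_def hv_def by auto
  obtain kz where kz: "c yz = real kz / 2" using hv_nat[OF hz finV] unfolding c_def by blast
  have kzK: "kz \<in> K" unfolding K_def using fz hz kz by blast
  have czle: "c yz \<le> real (OPT n E w)"
  proof -
    have "c yz = (\<Sum>i\<in>V. real (w i * (if z i then 1 else 0)))" unfolding c_def yz_def
      by (rule sum.cong) auto
    also have "\<dots> \<le> (\<Sum>i\<in>{..<n}. real (w i * (if z i then 1 else 0)))"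
      by (rule sum_mono2) (auto simp: V_def rem_vertices_def)
    also have "\<dots> = real (Cost n w z)" unfolding Cost_def by (simp only: of_nat_sum)
    finally show ?thesis using z(2) by simp
  qed
  define k0 where "k0 = (LEAST k. k \<in> K)"
  have k0K: "k0 \<in> K" unfolding k0_def using kzK by (rule LeastI)
  have k0le: "k0 \<le> k" if "k \<in> K" for k unfolding k0_def using that by (rule Least_le)
  obtain y0 where y0: "feas y0" "c y0 = real k0 / 2" using k0K unfolding K_def by blast
  have "Inf {c y | y. feas y} = real k0 / 2"
  proof (rule cInf_eq_minimum)
    show "real k0 / 2 \<in> {c y | y. feas y}" using y0 by (metis (mono_tags, lifting) mem_Collect_eq)
  next
    fix s assume "s \<in> {c y | y. feas y}"
    then obtain y where y: "feas y" "s = c y" by blast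
    obtain y' where y': "feas y'" "\<forall>i\<in>V. hv (y' i)" "c y' \<le> c y" using half[OF y(1)] by blast
    obtain k' where k': "c y' = real k' / 2" using hv_nat[OF y'(2) finV] unfolding c_def by blast
    have "k' \<in> K" unfolding K_def using y' k' by blast
    then have "k0 \<le> k'" by (rule k0le)
    then show "real k0 / 2 \<le> s" using y' k' y(2) by simp
  qed
  moreover have "k0 \<le> 2 * OPT n E w"
  proof -
    have "k0 \<le> kz" using k0le kzK by blast
    then have "real k0 / 2 \<le> real (OPT n E w)" using kz czle by simp
    then show ?thesis by linarith
  qed
  ultimately show ?thesis using LPe by (intro exI[of _ k0]) simp
qed


definition anti where
  "anti n E w P \<longleftrightarrow> finite P \<and> P \<noteq> {} \<and> (\<forall>a\<in>P. \<forall>b\<in>P. a \<noteq> b \<longrightarrow> \<not> fit_le n E w a b)"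

lemma step_anti:
  assumes "anti n E w P" "Q \<in> set_pmf (semo_step n E w P)"
  shows "anti n E w Q"
proof -
  have fin: "finite P" "P \<noteq> {}" using assms(1) unfolding anti_def by auto
  have sP: "set_pmf (pmf_of_set P) = P" by (rule set_pmf_of_set[OF fin(2) fin(1)])
  from assms(2) obtain x x' where
    Q: "Q = (if (\<exists>y\<in>P. fit_le n E w y x') then P else insert x' {z \<in> P. \<not> fit_le n E w x' z})"
    unfolding semo_step_def set_bind_pmf sP by auto
  show ?thesis
  proof (cases "\<exists>y\<in>P. fit_le n E w y x'")
    case True then show ?thesis using Q assms(1) by simp
  next
    case False
    then have Q': "Q = insert x' {z \<in> P. \<not> fit_le n E w x' z}" using Q by simp
    have "finite Q" using fin Q' by simp
    moreover have "Q \<noteq> {}" using Q' by simp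
    moreover have "\<forall>a\<in>Q. \<forall>b\<in>Q. a \<noteq> b \<longrightarrow> \<not> fit_le n E w a b"
      using False assms(1) unfolding Q' anti_def by blast
    ultimately show ?thesis unfolding anti_def by blast
  qed
qed

lemma pop_anti: "\<forall>P \<in> set_pmf (semo_pop n E w t). anti n E w P"
proof (induction t)
  case 0 then show ?case unfolding anti_def by simp
next
  case (Suc t)
  show ?case
  proof
    fix Q assume "Q \<in> set_pmf (semo_pop n E w (Suc t))"
    then obtain P where "P \<in> set_pmf (semo_pop n E w t)" "Q \<in> set_pmf (semo_step n E w P)"
      by (auto simp only: semo_pop.simps set_bind_pmf)
    then show "anti n E w Q" using Suc step_anti by blast
  qed
qed

lemma anti_card:
  assumes g: "is_graph n E" and a: "anti n E w P"
  shows "card P \<le> 2 * OPT n E w + 1"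
proof -
  define gk where "gk x = (SOME k::nat. LP n E w x = real k / 2 \<and> k \<le> 2 * OPT n E w)" for x
  have gk: "LP n E w x = real (gk x) / 2 \<and> gk x \<le> 2 * OPT n E w" for x
    unfolding gk_def by (rule someI_ex, rule LP_half[OF g])
  have inj: "inj_on gk P"
  proof (rule inj_onI)
    fix a b assume ab: "a \<in> P" "b \<in> P" "gk a = gk b"
    have "LP n E w a = real (gk a) / 2" "LP n E w b = real (gk b) / 2" using gk[of a] gk[of b] by simp_all
    then have L: "LP n E w a = LP n E w b" using ab(3) by simp
    have "real (Cost n w a) \<le> real (Cost n w b) \<or> real (Cost n w b) \<le> real (Cost n w a)" by linarith
    then have "fit_le n E w a b \<or> fit_le n E w b a" unfolding fit_le_def using L by auto
    moreover have "\<forall>a\<in>P. \<forall>b\<in>P. a \<noteq> b \<longrightarrow> \<not> fit_le n E w a b" using a unfolding anti_def by simp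
    ultimately show "a = b" using ab(1,2) by metis
  qed
  have sub: "gk ` P \<subseteq> {..2 * OPT n E w}"
  proof
    fix k assume "k \<in> gk ` P"
    then obtain a where "k = gk a" by blast
    then show "k \<in> {..2 * OPT n E w}" using gk[of a] by simp
  qed
  have "card P \<le> card {..2 * OPT n E w}"
    by (rule card_inj_on_le[OF inj sub]) simp
  then show ?thesis by simp
qed

theorem lemma3:
  fixes n :: nat and E :: "nat set set" and w :: "nat \<Rightarrow> nat"
  assumes "is_graph n E"
    and "\<forall>i<n. w i > 0"
  shows "\<forall>t. \<forall>P \<in> set_pmf (semo_pop n E w t). card P \<le> 2 * OPT n E w + 1"
proof (intro allI ballI)
  fix t P assume "P \<in> set_pmf (semo_pop n E w t)"
  then have "anti n E w P" using pop_anti by blast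
  then show "card P \<le> 2 * OPT n E w + 1" by (rule anti_card[OF assms(1)])
qed

end
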